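(* Let $\mathcal{L}\subseteq\{w\in\{t,t^{-1}\}^*:\sharp_t(w)-\sharp_{t^{-1}}(w)\ge0\}$ be a regular language. Then there is a constant $K\ge0$ such that for all $w\in\mathcal{L}$ and all $i,j\in\{0,1,\dots,\ell(w)\}$ with $j>i$, one has $f_w(j)>f_w(i)-K$.
   Context: For a word $w$ and a letter $x$, $\sharp_x(w)$ is the number of occurrences of $x$ in $w$, and $\ell(w)$ is the length of $w$. For $w=x_1\cdots x_n\in\{t,t^{-1}\}^*$ with $x_i\in\{t,t^{-1}\}$, define $f_w\colon\{0,1,\dots,n\}\to\mathbb{Z}$ by $f_w(i)=\sharp_t(x_1\cdots x_i)-\sharp_{t^{-1}}(x_1\cdots x_i)$. A regular language is one accepted by a finite state automaton. *)

theory Defs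
  imports Main
begin

datatype letter = T | Tinv

definition occ :: "letter \<Rightarrow> letter list \<Rightarrow> nat" where
  "occ x w = length (filter (\<lambda>y. y = x) w)"

definition fw :: "letter list \<Rightarrow> nat \<Rightarrow> int" where
  "fw w i = int (occ T (take i w)) - int (occ Tinv (take i w))"

definition dfa_ok :: "nat set \<Rightarrow> nat \<Rightarrow> (nat \<Rightarrow> letter \<Rightarrow> nat) \<Rightarrow> nat set \<Rightarrow> bool" where
  "dfa_ok Q q0 \<delta> F \<longleftrightarrow> finite Q \<and> q0 \<in> Q \<and> F \<subseteq> Q \<and> (\<forall>q\<in>Q. \<forall>a. \<delta> q a \<in> Q)"

definition dfa_lang :: "nat \<Rightarrow> (nat \<Rightarrow> letter \<Rightarrow> nat) \<Rightarrow> nat set \<Rightarrow> letter list set" where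
  "dfa_lang q0 \<delta> F = {w. foldl \<delta> q0 w \<in> F}"

definition regular :: "letter list set \<Rightarrow> bool" where
  "regular L \<longleftrightarrow> (\<exists>Q q0 \<delta> F. dfa_ok Q q0 \<delta> F \<and> L = dfa_lang q0 \<delta> F)"

end

theory Submission
  imports Defs
begin

lemma drop_bound:
  fixes g :: "nat \<Rightarrow> int" and s :: "nat \<Rightarrow> 'a"
  assumes step: "\<And>k. k < N \<Longrightarrow> g (Suc k) \<ge> g k - 1"
    and mono: "\<And>p q. p < q \<Longrightarrow> q \<le> N \<Longrightarrow> s p = s q \<Longrightarrow> g p \<le> g q"
  shows "i \<le> j \<Longrightarrow> j \<le> N \<Longrightarrow> g i - g j \<ge> int d \<Longrightarrow> card (s ` {i..j}) \<ge> d + 1"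
proof (induction d arbitrary: i)
  case 0
  then show ?case by (simp add: Suc_le_eq card_gt_0_iff)
next
  case (Suc d)
  define P where "P = {p\<in>{i..j}. g p \<ge> g i}"
  define p where "p = Max P"
  have fin: "finite P" unfolding P_def by simp
  have iP: "i \<in> P" unfolding P_def using Suc.prems by simp
  have pP: "p \<in> P" unfolding p_def using fin iP Max_in by blast
  hence ip: "i \<le> p" "p \<le> j" "g p \<ge> g i" unfolding P_def by auto
  have "p \<noteq> j" using ip Suc.prems by auto
  hence pj: "p < j" using ip by simp
  have after: "g q < g i" if "p < q" "q \<le> j" for q
  proof (rule ccontr)
    assume "\<not> g q < g i"
    hence "q \<in> P" unfolding P_def using that ip by auto
    hence "q \<le> p" unfolding p_def using fin Max_ge by blast
    thus False using that by simp
  qed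
  have "g (Suc p) \<ge> g p - 1" using step pj Suc.prems by simp
  hence "g (Suc p) - g j \<ge> int d" using ip Suc.prems by simp
  hence IH: "card (s ` {Suc p..j}) \<ge> d + 1" using Suc.IH[of "Suc p"] pj Suc.prems by simp
  have notin: "s p \<notin> s ` {Suc p..j}"
  proof
    assume "s p \<in> s ` {Suc p..j}"
    then obtain q where q: "q \<in> {Suc p..j}" "s p = s q" by auto
    hence "g p \<le> g q" using mono[of p q] Suc.prems by simp
    moreover have "g q < g i" using after q by simp
    ultimately show False using ip by simp
  qed
  have sub: "insert (s p) (s ` {Suc p..j}) \<subseteq> s ` {i..j}" using ip by auto
  have "card (insert (s p) (s ` {Suc p..j})) = Suc (card (s ` {Suc p..j}))"
    using notin by simp
  moreover have "card (insert (s p) (s ` {Suc p..j})) \<le> card (s ` {i..j})"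
    using sub by (intro card_mono) auto
  ultimately show ?case using IH by simp
qed

definition net :: "letter list \<Rightarrow> int" where
  "net w = int (occ T w) - int (occ Tinv w)"

lemma net_append[simp]: "net (u @ v) = net u + net v"
  by (simp add: net_def occ_def)

lemma net_rep: "net (concat (replicate m u)) = int m * net u"
  by (induction m) (auto simp: algebra_simps net_def occ_def)

lemma fw_net: "fw w i = net (take i w)"
  by (simp add: fw_def net_def)

lemma foldl_in: "dfa_ok Q q0 \<delta> F \<Longrightarrow> r \<in> Q \<Longrightarrow> foldl \<delta> r xs \<in> Q"
  by (induction xs arbitrary: r) (auto simp: dfa_ok_def)

lemma foldl_rep: "foldl \<delta> r u = r \<Longrightarrow> foldl \<delta> r (concat (replicate m u)) = r"
  by (induction m) auto

lemma pump:
  assumes L: "L = dfa_lang q0 \<delta> F"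
    and pos: "\<And>w. w \<in> L \<Longrightarrow> net w \<ge> 0"
    and w: "w \<in> L" and pq: "p < q" "q \<le> length w"
    and st: "foldl \<delta> q0 (take p w) = foldl \<delta> q0 (take q w)"
  shows "net (take p w) \<le> net (take q w)"
proof -
  define x where "x = take p w"
  define u where "u = take (q - p) (drop p w)"
  define y where "y = drop q w"
  have wq: "take q w = x @ u" unfolding x_def u_def using pq
    by (metis le_add_diff_inverse less_imp_le_nat take_add)
  have wd: "w = x @ u @ y" using wq unfolding y_def by (metis append.assoc append_take_drop_id)
  have loop: "foldl \<delta> (foldl \<delta> q0 x) u = foldl \<delta> q0 x" using st wq unfolding x_def by simp
  have inL: "x @ concat (replicate m u) @ y \<in> L" for m
  proof -
    have "foldl \<delta> q0 (x @ concat (replicate m u) @ y) = foldl \<delta> q0 (x @ u @ y)"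
      using foldl_rep[OF loop] loop by simp
    thus ?thesis using w wd unfolding L dfa_lang_def by simp
  qed
  have "net u \<ge> 0"
  proof (rule ccontr)
    assume neg: "\<not> net u \<ge> 0"
    define m where "m = nat (net x + net y) + 1"
    have "net (x @ concat (replicate m u) @ y) = net x + net y + int m * net u"
      by (simp add: net_rep)
    also have "... \<le> net x + net y - int m"
    proof -
      have "int m * net u \<le> int m * (-1)" using neg by (intro mult_left_mono) auto
      thus ?thesis by simp
    qed
    also have "... < 0" unfolding m_def by simp
    finally show False using pos[OF inL[of m]] by simp
  qed
  thus ?thesis using wq unfolding x_def by simp
qed

theorem lemma4p4:
  fixes L :: "letter list set"
  assumes "regular L"
    and "L \<subseteq> {w. int (occ T w) - int (occ Tinv w) \<ge> 0}"
  shows "\<exists>K::int. K \<ge> 0 \<and> (\<forall>w\<in>L. \<forall>i j. i \<le> length w \<and> j \<le> length w \<and> j > i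
            \<longrightarrow> fw w j > fw w i - K)"
proof -
  obtain Q q0 \<delta> F where ok: "dfa_ok Q q0 \<delta> F" and L: "L = dfa_lang q0 \<delta> F"
    using assms(1) unfolding regular_def by blast
  have pos: "\<And>w. w \<in> L \<Longrightarrow> net w \<ge> 0" using assms(2) unfolding net_def by auto
  have "\<forall>w\<in>L. \<forall>i j. i \<le> length w \<and> j \<le> length w \<and> j > i
            \<longrightarrow> fw w j > fw w i - int (card Q)"
  proof (intro ballI allI impI)
    fix w i j assume w: "w \<in> L" and ij: "i \<le> length w \<and> j \<le> length w \<and> j > i"
    define g where "g k = net (take k w)" for k
    define s where "s k = foldl \<delta> q0 (take k w)" for k
    have step: "g (Suc k) \<ge> g k - 1" if "k < length w" for k
    proof -
      have "take (Suc k) w = take k w @ [w ! k]" using that by (simp add: take_Suc_conv_app_nth)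
      thus ?thesis unfolding g_def by (cases "w ! k") (auto simp: net_def occ_def)
    qed
    have mono: "g p \<le> g q" if "p < q" "q \<le> length w" "s p = s q" for p q
      unfolding g_def using pump[OF L pos w that(1,2)] that(3) unfolding s_def by simp
    have q0: "q0 \<in> Q" using ok unfolding dfa_ok_def by simp
    have "card (s ` {i..j}) \<le> card Q"
      using ok foldl_in[OF ok q0] unfolding s_def dfa_ok_def by (intro card_mono) auto
    moreover have "g i - g j < int (card (s ` {i..j}))"
    proof (rule ccontr)
      assume "\<not> ?thesis"
      hence ge: "g i - g j \<ge> int (card (s ` {i..j}))" by simp
      have ij2: "i \<le> j" "j \<le> length w" using ij by auto
      have "card (s ` {i..j}) \<ge> card (s ` {i..j}) + 1"
        by (rule drop_bound[of "length w" g s, OF step mono ij2 ge]) auto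
      thus False by simp
    qed
    ultimately show "fw w j > fw w i - int (card Q)" unfolding g_def fw_net by simp
  qed
  thus ?thesis by (intro exI[of _ "int (card Q)"]) simp
qed

end
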